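(* Let $(D,\prec,\succ,d)$ be a differential dendriform algebra of weight zero. Define, for $a,b\in D$, $$a\searrow b:=d(a)\succ b,\quad a\nearrow b:=a\succ d(b),\quad a\swarrow b:=d(a)\prec b,\quad a\nwarrow b:=a\prec d(b).$$ Then $(D,\searrow,\nearrow,\swarrow,\nwarrow)$ is a Novikov-dendriform algebra. Moreover, with $$a\vdash b:=a\searrow b+a\swarrow b=d(a)\succ b+d(a)\prec b,\qquad a\dashv b:=a\nearrow b+a\nwarrow b=a\succ d(b)+a\prec d(b),$$ the triple $(D,\vdash,\dashv)$ is a Novikov-associative algebra.
   Context: $\mathbf{k}$ is a commutative unital ring. A dendriform algebra is a $\mathbf{k}$-module $D$ with bilinear operations $\prec,\succ$ such that for all $a,b,c\in D$: $(a\prec b)\prec c=a\prec(b\prec c+b\succ c)$, $(a\succ b)\prec c=a\succ(b\prec c)$, $(a\prec b+a\succ b)\succ c=a\succ(b\succ c)$. A derivation of weight $\lambda$ on it is a linear map $d$ with $d(a\prec b)=d(a)\prec b+a\prec d(b)+\lambda d(a)\prec d(b)$ and $d(a\succ b)=d(a)\succ b+a\succ d(b)+\lambda d(a)\succ d(b)$ for all $a,b$; then $(D,\prec,\succ,d)$ is a differential dendriform algebra of weight $\lambda$. A Novikov-dendriform algebra is a $\mathbf{k}$-module $N$ with four bilinear operations $\searrow,\nearrow,\swarrow,\nwarrow$ such that for all $a,b,c\in N$: (i) $(a\swarrow b)\nwarrow c=a\swarrow(b\nearrow c+b\nwarrow c)$; (ii) $(a\searrow b)\nwarrow c=a\searrow(b\nwarrow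 c)$; (iii) $(a\searrow b+a\swarrow b)\nearrow c=a\searrow(b\nearrow c)$; (iv) $(a\nwarrow b)\nwarrow c-a\nwarrow(b\searrow c+b\swarrow c)=a\swarrow(b\searrow c+b\swarrow c)-(a\nwarrow b)\swarrow c$; (v) $(a\nearrow b)\nwarrow c-a\nearrow(b\swarrow c)=a\searrow(b\swarrow c)-(a\nearrow b)\swarrow c$; (vi) $(a\nearrow b+a\nwarrow b)\nearrow c-a\nearrow(b\searrow c)=a\searrow(b\searrow c)-(a\nearrow b+a\nwarrow b)\searrow c$. A Novikov-associative algebra is a $\mathbf{k}$-module $A$ with bilinear operations $\vdash,\dashv$ such that for all $a,b,c$: $(a\vdash b)\dashv c=a\vdash(b\dashv c)$ and $(a\dashv b)\dashv c-a\dashv(b\vdash c)=a\vdash(b\vdash c)-(a\dashv b)\vdash c$. *)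

theory Defs
  imports Complex_Main
begin

text \<open>A k-module D is modelled by a type 'd :: ab_group_add together with a scalar
multiplication smul satisfying the axioms of the HOL locale module (HOL.Modules),
over a commutative unital ring 'k.\<close>

definition bilinear_op :: "('k::comm_ring_1 \<Rightarrow> 'd::ab_group_add \<Rightarrow> 'd) \<Rightarrow> ('d \<Rightarrow> 'd \<Rightarrow> 'd) \<Rightarrow> bool" where
  "bilinear_op smul m \<longleftrightarrow>
     (\<forall>a b c. m (a + b) c = m a c + m b c) \<and>
     (\<forall>a b c. m a (b + c) = m a b + m a c) \<and>
     (\<forall>k a b. m (smul k a) b = smul k (m a b)) \<and>
     (\<forall>k a b. m a (smul k b) = smul k (m a b))"

definition linear_map :: "('k::comm_ring_1 \<Rightarrow> 'd::ab_group_add \<Rightarrow> 'd) \<Rightarrow> ('d \<Rightarrow> 'd) \<Rightarrow> bool" where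
  "linear_map smul f \<longleftrightarrow> (\<forall>a b. f (a + b) = f a + f b) \<and> (\<forall>k a. f (smul k a) = smul k (f a))"

definition dendriform :: "('k::comm_ring_1 \<Rightarrow> 'd::ab_group_add \<Rightarrow> 'd) \<Rightarrow> ('d \<Rightarrow> 'd \<Rightarrow> 'd) \<Rightarrow> ('d \<Rightarrow> 'd \<Rightarrow> 'd) \<Rightarrow> bool" where
  "dendriform smul prec succ \<longleftrightarrow> module smul \<and> bilinear_op smul prec \<and> bilinear_op smul succ \<and>
     (\<forall>a b c. prec (prec a b) c = prec a (prec b c + succ b c)) \<and>
     (\<forall>a b c. prec (succ a b) c = succ a (prec b c)) \<and>
     (\<forall>a b c. succ (prec a b + succ a b) c = succ a (succ b c))"

definition dendriform_derivation :: "('k::comm_ring_1 \<Rightarrow> 'd::ab_group_add \<Rightarrow> 'd) \<Rightarrow> 'k \<Rightarrow> ('d \<Rightarrow> 'd \<Rightarrow> 'd) \<Rightarrow> ('d \<Rightarrow> 'd \<Rightarrow> 'd) \<Rightarrow> ('d \<Rightarrow> 'd) \<Rightarrow> bool" where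
  "dendriform_derivation smul lam prec succ d \<longleftrightarrow> linear_map smul d \<and>
     (\<forall>a b. d (prec a b) = prec (d a) b + prec a (d b) + smul lam (prec (d a) (d b))) \<and>
     (\<forall>a b. d (succ a b) = succ (d a) b + succ a (d b) + smul lam (succ (d a) (d b)))"

definition differential_dendriform :: "('k::comm_ring_1 \<Rightarrow> 'd::ab_group_add \<Rightarrow> 'd) \<Rightarrow> 'k \<Rightarrow> ('d \<Rightarrow> 'd \<Rightarrow> 'd) \<Rightarrow> ('d \<Rightarrow> 'd \<Rightarrow> 'd) \<Rightarrow> ('d \<Rightarrow> 'd) \<Rightarrow> bool" where
  "differential_dendriform smul lam prec succ d \<longleftrightarrow> dendriform smul prec succ \<and> dendriform_derivation smul lam prec succ d"

text \<open>Operations in order: se = searrow, ne = nearrow, sw = swarrow, nw = nwarrow.\<close>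
definition novikov_dendriform :: "('k::comm_ring_1 \<Rightarrow> 'd::ab_group_add \<Rightarrow> 'd) \<Rightarrow> ('d \<Rightarrow> 'd \<Rightarrow> 'd) \<Rightarrow> ('d \<Rightarrow> 'd \<Rightarrow> 'd) \<Rightarrow> ('d \<Rightarrow> 'd \<Rightarrow> 'd) \<Rightarrow> ('d \<Rightarrow> 'd \<Rightarrow> 'd) \<Rightarrow> bool" where
  "novikov_dendriform smul se ne sw nw \<longleftrightarrow> module smul \<and>
     bilinear_op smul se \<and> bilinear_op smul ne \<and> bilinear_op smul sw \<and> bilinear_op smul nw \<and>
     (\<forall>a b c. nw (sw a b) c = sw a (ne b c + nw b c)) \<and>
     (\<forall>a b c. nw (se a b) c = se a (nw b c)) \<and>
     (\<forall>a b c. ne (se a b + sw a b) c = se a (ne b c)) \<and>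
     (\<forall>a b c. nw (nw a b) c - nw a (se b c + sw b c) = sw a (se b c + sw b c) - sw (nw a b) c) \<and>
     (\<forall>a b c. nw (ne a b) c - ne a (sw b c) = se a (sw b c) - sw (ne a b) c) \<and>
     (\<forall>a b c. ne (ne a b + nw a b) c - ne a (se b c) = se a (se b c) - se (ne a b + nw a b) c)"

definition novikov_associative :: "('k::comm_ring_1 \<Rightarrow> 'd::ab_group_add \<Rightarrow> 'd) \<Rightarrow> ('d \<Rightarrow> 'd \<Rightarrow> 'd) \<Rightarrow> ('d \<Rightarrow> 'd \<Rightarrow> 'd) \<Rightarrow> bool" where
  "novikov_associative smul vd dv \<longleftrightarrow> module smul \<and> bilinear_op smul vd \<and> bilinear_op smul dv \<and>
     (\<forall>a b c. dv (vd a b) c = vd a (dv b c)) \<and>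
     (\<forall>a b c. dv (dv a b) c - dv a (vd b c) = vd a (vd b c) - vd (dv a b) c)"

end

theory Submission
  imports Defs
begin

lemma bil_ext:
  assumes "bilinear_op smul m"
  shows "m (a + b) c = m a c + m b c" "m a (b + c) = m a b + m a c"
    "m (- a) c = - m a c" "m a (- b) = - m a b"
    "m (a - b) c = m a c - m b c" "m a (b - c) = m a b - m a c"
    "m 0 c = 0" "m a 0 = 0"
proof -
  have A: "\<And>a b c. m (a + b) c = m a c + m b c" and B: "\<And>a b c. m a (b + c) = m a b + m a c"
    using assms unfolding bilinear_op_def by auto
  have Z1: "m 0 c = 0" for c using A[of 0 0 c] by simp
  have Z2: "m a 0 = 0" for a using B[of a 0 0] by simp
  have N1: "m (- a) c = - m a c" for a c using A[of a "-a" c] Z1 by (metis add.commute add.right_neutral add_left_cancel add.right_inverse)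
  have N2: "m a (- b) = - m a b" for a b using B[of a b "-b"] Z2 by (metis add.commute add.right_neutral add_left_cancel add.right_inverse)
  show "m (a + b) c = m a c + m b c" "m a (b + c) = m a b + m a c"
    "m (- a) c = - m a c" "m a (- b) = - m a b" "m 0 c = 0" "m a 0 = 0"
    using A B N1 N2 Z1 Z2 by auto
  show "m (a - b) c = m a c - m b c" using A[of a "-b" c] N1 by simp
  show "m a (b - c) = m a b - m a c" using B[of a b "-c"] N2 by simp
qed

theorem proposition3p12:
  fixes smul :: "'k::comm_ring_1 \<Rightarrow> 'd::ab_group_add \<Rightarrow> 'd"
    and prec succ :: "'d \<Rightarrow> 'd \<Rightarrow> 'd" and d :: "'d \<Rightarrow> 'd"
  assumes "differential_dendriform smul 0 prec succ d"
  shows "novikov_dendriform smul (\<lambda>a b. succ (d a) b) (\<lambda>a b. succ a (d b))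
           (\<lambda>a b. prec (d a) b) (\<lambda>a b. prec a (d b))
       \<and> novikov_associative smul (\<lambda>a b. succ (d a) b + prec (d a) b)
           (\<lambda>a b. succ a (d b) + prec a (d b))"
proof -
  have M: "module smul" and bp: "bilinear_op smul prec" and bs: "bilinear_op smul succ"
    and D1: "\<And>a b c. prec (prec a b) c = prec a (prec b c + succ b c)"
    and D2: "\<And>a b c. prec (succ a b) c = succ a (prec b c)"
    and D3: "\<And>a b c. succ (prec a b + succ a b) c = succ a (succ b c)"
    and L: "linear_map smul d"
    and dp0: "\<And>a b. d (prec a b) = prec (d a) b + prec a (d b) + smul 0 (prec (d a) (d b))"
    and ds0: "\<And>a b. d (succ a b) = succ (d a) b + succ a (d b) + smul 0 (succ (d a) (d b))"
    using assms unfolding differential_dendriform_def dendriform_def dendriform_derivation_def by auto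
  have s0: "\<And>x. smul 0 x = 0" using M by (simp add: module.scale_zero_left)
  have dp: "\<And>a b. d (prec a b) = prec (d a) b + prec a (d b)" using dp0 s0 by simp
  have ds: "\<And>a b. d (succ a b) = succ (d a) b + succ a (d b)" using ds0 s0 by simp
  have dA: "\<And>a b. d (a + b) = d a + d b" and dS: "\<And>k a. d (smul k a) = smul k (d a)"
    using L unfolding linear_map_def by auto
  have d0: "d 0 = 0" using dA[of 0 0] by simp
  have dN: "\<And>a. d (- a) = - d a" using dA d0 by (metis add.right_inverse eq_neg_iff_add_eq_0)
  have dM: "\<And>a b. d (a - b) = d a - d b" using dA dN by (metis diff_conv_add_uminus)
  note P = bil_ext[OF bp] and S = bil_ext[OF bs]
  have D3': "\<And>a b c. succ (prec a b) c = succ a (succ b c) - succ (succ a b) c"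
    using D3 S(1) by (metis add_diff_cancel)
  have Mod: "\<And>k a b. smul k (a + b) = smul k a + smul k b" using M by (simp add: module.scale_right_distrib)
  have bil_comp1: "bilinear_op smul (\<lambda>a b. m (d a) b)" if "bilinear_op smul m" for m
    using that dA dS unfolding bilinear_op_def by auto
  have bil_comp2: "bilinear_op smul (\<lambda>a b. m a (d b))" if "bilinear_op smul m" for m
    using that dA dS unfolding bilinear_op_def by auto
  have bil_sum: "bilinear_op smul (\<lambda>a b. m a b + n a b)" if "bilinear_op smul m" "bilinear_op smul n" for m n
    using that Mod unfolding bilinear_op_def by (simp add: algebra_simps)
  note R = P S D1 D2 D3' dp ds dA dN dM d0
  show ?thesis
    unfolding novikov_dendriform_def novikov_associative_def
    using M bil_comp1[OF bp] bil_comp1[OF bs] bil_comp2[OF bp] bil_comp2[OF bs]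
      bil_sum[OF bil_comp1[OF bs] bil_comp1[OF bp]] bil_sum[OF bil_comp2[OF bs] bil_comp2[OF bp]]
    by (simp add: R algebra_simps)
qed

end
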